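(* Let $V_1,V_2$ be Orlicz functions such that $V_1(x)/V_2(x)\to\infty$ as $|x|\to\infty$ and $\int_{\mathbb R}V_1(x)e^{\alpha V_2(x)}dx<\infty$ for all $\alpha\in(-\infty,0)$. For $R>0$ let $\alpha(R)\in(-\infty,0)$ be the (unique) solution of $R=\int_{\mathbb R}V_2\,d\mu_{V_2,\alpha(R)}$. Then there exists $\overline R\in(0,\infty)$ such that for all $0<R\le\overline R$, $$m_{V_1}(\mu_{V_2,\alpha(R)})\le m_{V_1}(\mu_{V_2,\alpha(\overline R)})=1.$$
   Context: An Orlicz function is a convex, symmetric function $V:\mathbb R\to[0,\infty)$ with $V(0)=0$ and $V(x)>0$ for $x\ne0$. For $\beta<0$, $\mu_{V,\beta}$ is the probability measure with Lebesgue density $e^{\beta V(x)}/\int_{\mathbb R}e^{\beta V(t)}dt$. $m_V(\mu):=\int V\,d\mu$. *)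

theory Defs
  imports "HOL-Analysis.Analysis"
begin

definition orlicz :: "(real \<Rightarrow> real) \<Rightarrow> bool" where
  "orlicz V \<longleftrightarrow> convex_on UNIV V \<and> (\<forall>x. V (- x) = V x) \<and> V 0 = 0 \<and> (\<forall>x. x \<noteq> 0 \<longrightarrow> V x > 0)"

definition gibbs_measure :: "(real \<Rightarrow> real) \<Rightarrow> real \<Rightarrow> real measure" where
  "gibbs_measure V \<beta> = density lborel (\<lambda>x. ennreal (exp (\<beta> * V x) / (\<integral>t. exp (\<beta> * V t) \<partial>lborel)))"

definition m_V :: "(real \<Rightarrow> real) \<Rightarrow> real measure \<Rightarrow> real" where
  "m_V V \<mu> = (\<integral>x. V x \<partial>\<mu>)"

end

theory Submission
  imports Defs
begin


lemma orlicz_cont: "orlicz V \<Longrightarrow> continuous_on UNIV V"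
  unfolding orlicz_def by (intro convex_on_continuous) auto

lemma orlicz_meas: "orlicz V \<Longrightarrow> V \<in> borel_measurable borel"
  by (intro borel_measurable_continuous_onI orlicz_cont)

lemma orlicz_nonneg: "orlicz V \<Longrightarrow> V x \<ge> 0"
  unfolding orlicz_def by (cases "x = 0") (auto intro: less_imp_le)

lemma orlicz_scale:
  assumes "orlicz V" "0 \<le> s" "s \<le> t" "t > 0"
  shows "V s \<le> (s / t) * V t"
proof -
  have c: "convex_on UNIV V" and z: "V 0 = 0" using assms(1) unfolding orlicz_def by auto
  have "V ((1 - s/t) *\<^sub>R 0 + (s/t) *\<^sub>R t) \<le> (1 - s/t) * V 0 + (s/t) * V t"
    by (rule convex_onD[OF c]) (use assms in auto)
  then show ?thesis using assms z by simp
qed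

lemma orlicz_abs: "orlicz V \<Longrightarrow> V \<bar>x\<bar> = V x"
  unfolding orlicz_def by (cases "x \<ge> 0") auto

lemma orlicz_strict:
  assumes "orlicz V" "\<bar>x\<bar> < \<bar>y\<bar>" shows "V x < V y"
proof -
  have p: "V \<bar>y\<bar> > 0" using assms unfolding orlicz_def by (smt (verit) abs_zero)
  have "V \<bar>x\<bar> \<le> (\<bar>x\<bar> / \<bar>y\<bar>) * V \<bar>y\<bar>"
    using assms by (intro orlicz_scale) auto
  also have "\<dots> < V \<bar>y\<bar>"
  proof -
    have q: "\<bar>x\<bar> / \<bar>y\<bar> < 1" using assms(2) by (simp add: divide_less_eq)
    show ?thesis using mult_strict_right_mono[OF q p] by simp
  qed
  finally show ?thesis using orlicz_abs[OF assms(1)] by metis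
qed

lemma orlicz_mono:
  assumes "orlicz V" "\<bar>x\<bar> \<le> \<bar>y\<bar>" shows "V x \<le> V y"
proof (cases "\<bar>x\<bar> = \<bar>y\<bar>")
  case True then show ?thesis using orlicz_abs[OF assms(1), of x] orlicz_abs[OF assms(1), of y] by simp
next
  case False then show ?thesis using orlicz_strict[OF assms(1), of x y] assms(2) by linarith
qed

lemma orlicz_lin:
  assumes "orlicz V" "1 \<le> \<bar>y\<bar>" shows "\<bar>y\<bar> * V 1 \<le> V y"
proof -
  have "V 1 \<le> (1 / \<bar>y\<bar>) * V \<bar>y\<bar>" using assms by (intro orlicz_scale) auto
  then show ?thesis using assms orlicz_abs[OF assms(1)] by (simp add: field_simps)
qed

lemma orlicz_unbounded:
  assumes "orlicz V" shows "\<exists>y. V y > M"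
proof -
  have p: "V 1 > 0" using assms unfolding orlicz_def by auto
  define y where "y = max 1 (\<bar>M\<bar> / V 1 + 1)"
  have "\<bar>y\<bar> * V 1 \<le> V y" using assms by (intro orlicz_lin) (auto simp: y_def)
  moreover have "\<bar>y\<bar> * V 1 > M"
  proof -
    have "\<bar>y\<bar> \<ge> \<bar>M\<bar> / V 1 + 1" by (simp add: y_def)
    then have "\<bar>y\<bar> * V 1 \<ge> (\<bar>M\<bar> / V 1 + 1) * V 1" using p by (intro mult_right_mono) auto
    also have "(\<bar>M\<bar> / V 1 + 1) * V 1 = \<bar>M\<bar> + V 1" using p by (simp add: field_simps)
    finally show ?thesis using p by linarith
  qed
  ultimately show ?thesis by (meson less_le_trans)
qed

lemma pos_integral:
  fixes g :: "real \<Rightarrow> real"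
  assumes "continuous_on UNIV g" "\<And>x. g x \<ge> 0" "integrable lborel g" "g x0 > 0"
  shows "integral\<^sup>L lborel g > 0"
proof (rule ccontr)
  assume "\<not> ?thesis"
  moreover have "integral\<^sup>L lborel g \<ge> 0" using assms(2) by (intro integral_nonneg_AE) simp
  ultimately have "integral\<^sup>L lborel g = 0" by simp
  then have ae: "AE x in lborel. g x = 0"
    using integral_nonneg_eq_0_iff_AE[of lborel g] assms(2,3) by simp
  have gm: "g \<in> borel_measurable borel" using assms(1) by (rule borel_measurable_continuous_onI)
  have op: "open {x. g x > 0}" using assms(1) by (intro open_Collect_less) (auto intro: continuous_intros)
  then obtain r where r: "r > 0" "ball x0 r \<subseteq> {x. g x > 0}" using assms(4)
    unfolding open_contains_ball by blast
  have "{x. g x > 0} \<in> sets lborel" using gm by measurable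
  moreover have "AE x in lborel. x \<notin> {x. g x > 0}" using ae by eventually_elim simp
  ultimately have "{x. g x > 0} \<in> null_sets lborel" by (simp add: AE_iff_measurable null_sets_def)
  moreover have bs: "ball x0 r \<in> sets lborel" by simp
  ultimately have "ball x0 r \<in> null_sets lborel" by (rule null_sets_subset[OF _ _ r(2)])
  moreover have "emeasure lborel (ball x0 r) = 2 * r" using r
    by (simp add: ball_eq_greaterThanLessThan ennreal_mult' [symmetric])
  ultimately show False using r by (simp add: null_sets_def)
qed


locale ctx =
  fixes V1 V2 :: "real \<Rightarrow> real"
  assumes o1: "orlicz V1" and o2: "orlicz V2"
    and lim: "filterlim (\<lambda>x. V1 x / V2 x) at_top at_infinity"
    and int1: "\<And>a. a < 0 \<Longrightarrow> integrable lborel (\<lambda>x. V1 x * exp (a * V2 x))"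
begin

lemma m1[measurable]: "V1 \<in> borel_measurable borel" by (rule orlicz_meas[OF o1])
lemma m2[measurable]: "V2 \<in> borel_measurable borel" by (rule orlicz_meas[OF o2])
lemma n1: "V1 x \<ge> 0" by (rule orlicz_nonneg[OF o1])
lemma n2: "V2 x \<ge> 0" by (rule orlicz_nonneg[OF o2])

lemma constC: "\<exists>C. \<forall>x. V2 x - C \<le> V1 x"
proof -
  have "eventually (\<lambda>x. V1 x / V2 x \<ge> 1) at_infinity"
    using lim by (simp add: filterlim_at_top)
  then obtain b where b: "\<And>x. norm x \<ge> b \<Longrightarrow> V1 x / V2 x \<ge> 1"
    unfolding eventually_at_infinity by blast
  have "V2 x - V2 b \<le> V1 x" for x
  proof (cases "\<bar>x\<bar> \<ge> \<bar>b\<bar>")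
    case True
    then have "V1 x / V2 x \<ge> 1" using b by auto
    then have "V2 x > 0" "V1 x \<ge> V2 x"
      using n1[of x] n2[of x] by (auto simp: le_divide_eq split: if_splits)
    then show ?thesis using n2[of b] by linarith
  next
    case False
    then have "V2 x \<le> V2 b" by (intro orlicz_mono[OF o2]) auto
    then show ?thesis using n1[of x] by linarith
  qed
  then show ?thesis by blast
qed

lemma intZ: assumes "a < 0" shows "integrable lborel (\<lambda>x. exp (a * V2 x))"
proof -
  have p: "V1 1 > 0" using o1 unfolding orlicz_def by auto
  have i1: "integrable lborel (\<lambda>x. V1 x * exp (a * V2 x) / V1 1)"
    using int1[OF assms] by (rule integrable_divide)
  have i2: "integrable lborel (indicator {-1..1::real} :: real \<Rightarrow> real)"
    by (rule integrable_real_indicator) auto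
  have "integrable lborel (\<lambda>x. V1 x * exp (a * V2 x) / V1 1 + indicator {-1..1} x)"
    using Bochner_Integration.integrable_add[OF i1 i2] .
  then show ?thesis
  proof (rule Bochner_Integration.integrable_bound)
    show "AE x in lborel. norm (exp (a * V2 x)) \<le> norm (V1 x * exp (a * V2 x) / V1 1 + indicator {-1..1} x)"
    proof (intro AE_I2)
      fix x
      show "norm (exp (a * V2 x)) \<le> norm (V1 x * exp (a * V2 x) / V1 1 + indicator {-1..1} x)"
      proof (cases "\<bar>x\<bar> \<le> 1")
        case True
        have "exp (a * V2 x) \<le> 1" using assms n2[of x] by (simp add: mult_nonpos_nonneg)
        moreover have "V1 x * exp (a * V2 x) / V1 1 \<ge> 0" using n1[of x] p by simp
        moreover have "indicator {-1..1} x = (1::real)" using True by (simp add: indicator_def abs_le_iff)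
        ultimately show ?thesis by (smt (verit) exp_gt_zero real_norm_def)
      next
        case False
        then have "V1 1 \<le> V1 x" using orlicz_mono[OF o1, of 1 x] by simp
        then have "exp (a * V2 x) \<le> V1 x * exp (a * V2 x) / V1 1"
          using p by (simp add: le_divide_eq)
        moreover have "indicator {-1..1} x = (0::real)" using False unfolding indicator_def by auto
        moreover have "V1 x * exp (a * V2 x) / V1 1 \<ge> 0" using n1[of x] p by simp
        ultimately show ?thesis by (smt (verit) exp_gt_zero real_norm_def)
      qed
    qed
  qed measurable
qed

lemma int2: assumes "a < 0" shows "integrable lborel (\<lambda>x. V2 x * exp (a * V2 x))"
proof -
  obtain C where C: "\<And>x. V2 x - C \<le> V1 x" using constC by blast
  have "integrable lborel (\<lambda>x. V1 x * exp (a * V2 x) + \<bar>C\<bar> * exp (a * V2 x))"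
    using Bochner_Integration.integrable_add[OF int1[OF assms] integrable_mult_right[OF intZ[OF assms]]] .
  then show ?thesis
  proof (rule Bochner_Integration.integrable_bound)
    show "AE x in lborel. norm (V2 x * exp (a * V2 x)) \<le> norm (V1 x * exp (a * V2 x) + \<bar>C\<bar> * exp (a * V2 x))"
    proof (intro AE_I2)
      fix x
      have "V2 x \<le> V1 x + \<bar>C\<bar>" using C[of x] by linarith
      then have "V2 x * exp (a * V2 x) \<le> (V1 x + \<bar>C\<bar>) * exp (a * V2 x)"
        by (intro mult_right_mono) auto
      then show "norm (V2 x * exp (a * V2 x)) \<le> norm (V1 x * exp (a * V2 x) + \<bar>C\<bar> * exp (a * V2 x))"
        using n1[of x] n2[of x] by (simp add: algebra_simps)
    qed
  qed measurable
qed

definition Z where "Z a = (\<integral>x. exp (a * V2 x) \<partial>lborel)"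

lemma Zpos: assumes "a < 0" shows "Z a > 0"
  unfolding Z_def
proof (rule pos_integral[of _ 0])
  show "continuous_on UNIV (\<lambda>x. exp (a * V2 x))"
    using orlicz_cont[OF o2] by (intro continuous_intros) auto
qed (use intZ[OF assms] in auto)

lemma Z_nonneg: "Z a \<ge> 0"
  unfolding Z_def by (intro integral_nonneg_AE) simp

lemma mV_eq:
  assumes "f \<in> borel_measurable borel"
  shows "m_V f (gibbs_measure V2 a) = (\<integral>x. f x * exp (a * V2 x) \<partial>lborel) / Z a"
proof -
  have "m_V f (gibbs_measure V2 a) = (\<integral>x. (exp (a * V2 x) / Z a) *\<^sub>R f x \<partial>lborel)"
    unfolding m_V_def gibbs_measure_def Z_def[symmetric]
    by (rule integral_density) (use assms Z_nonneg in \<open>auto\<close>)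
  also have "\<dots> = (\<integral>x. f x * exp (a * V2 x) \<partial>lborel) / Z a"
    by (simp add: mult.commute)
  finally show ?thesis .
qed

end


lemma h0_ex:
  fixes f h :: "real \<Rightarrow> real"
  assumes co: "\<And>x y. f x < f y \<Longrightarrow> h x \<le> h y" and hp: "\<And>x. h x \<ge> 0" and y0: "f y0 \<ge> m"
  shows "\<exists>h0. \<forall>x. (f x - m) * (h x - h0) \<ge> 0"
proof (cases "{x. f x < m} = {}")
  case True
  then have "\<forall>x. (f x - m) * (h x - 0) \<ge> 0" using hp by (auto simp: not_less)
  then show ?thesis by blast
next
  case False
  define S where "S = {x. f x < m}"
  have bdd: "bdd_above (h ` S)"
    unfolding bdd_above_def S_def using co y0 by (intro exI[of _ "h y0"]) force
  have ne: "h ` S \<noteq> {}" using False S_def by auto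
  have "(f x - m) * (h x - Sup (h ` S)) \<ge> 0" for x
  proof (cases "x \<in> S")
    case True
    then have "h x \<le> Sup (h ` S)" using bdd by (intro cSup_upper) auto
    moreover have "f x - m < 0" using True S_def by auto
    ultimately show ?thesis by (intro mult_nonpos_nonpos) auto
  next
    case False
    then have fx: "f x \<ge> m" using S_def by auto
    have "Sup (h ` S) \<le> h x" using ne
    proof (rule cSup_least)
      fix z assume "z \<in> h ` S"
      then obtain s where "s \<in> S" "z = h s" by auto
      then show "z \<le> h x" using co[of s x] fx S_def by auto
    qed
    then show ?thesis using fx by (intro mult_nonneg_nonneg) auto
  qed
  then show ?thesis by blast
qed

context ctx begin

definition N where "N f a = (\<integral>x. f x * exp (a * V2 x) \<partial>lborel)"

lemma cheb:
  assumes of: "orlicz f" and fi: "\<And>a. a < 0 \<Longrightarrow> integrable lborel (\<lambda>x. f x * exp (a * V2 x))"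
    and b: "b1 \<le> b2" "b2 < 0"
  shows "N f b1 / Z b1 \<le> N f b2 / Z b2"
    and "f = V2 \<Longrightarrow> b1 < b2 \<Longrightarrow> N f b1 / Z b1 < N f b2 / Z b2"
proof -
  have b1: "b1 < 0" using b by linarith
  define m where "m = N f b1 / Z b1"
  define c where "c = b2 - b1"
  define h where "h x = exp (c * V2 x)" for x
  have c0: "c \<ge> 0" using b c_def by simp
  have co: "h x \<le> h y" if "f x < f y" for x y
  proof -
    have "\<bar>x\<bar> < \<bar>y\<bar>" using orlicz_mono[OF of, of y x] that by linarith
    then have "V2 x \<le> V2 y" by (intro orlicz_mono[OF o2]) simp
    then show ?thesis unfolding h_def using c0 by (simp add: mult_left_mono)
  qed
  obtain y0 where y0: "f y0 > m" using orlicz_unbounded[OF of] by blast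
  obtain h0 where h0: "\<And>x. (f x - m) * (h x - h0) \<ge> 0"
    using h0_ex[of f h m y0] co y0 by (auto simp: h_def)
  define g where "g x = (f x - m) * (h x - h0) * exp (b1 * V2 x)" for x
  have hx: "h x * exp (b1 * V2 x) = exp (b2 * V2 x)" for x
    unfolding h_def c_def by (simp add: mult_exp_exp algebra_simps)
  have geq: "g x = f x * exp (b2 * V2 x) - m * exp (b2 * V2 x) - h0 * (f x * exp (b1 * V2 x))
      + (m * h0) * exp (b1 * V2 x)" for x
  proof -
    have "g x = (f x - m) * (h x * exp (b1 * V2 x)) - (f x - m) * h0 * exp (b1 * V2 x)"
      unfolding g_def by (simp add: algebra_simps)
    also have "\<dots> = (f x - m) * exp (b2 * V2 x) - (f x - m) * h0 * exp (b1 * V2 x)"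
      by (simp add: hx)
    finally show ?thesis by (simp add: algebra_simps)
  qed
  have gn: "g x \<ge> 0" for x unfolding g_def using h0[of x] by simp
  have I1: "integrable lborel (\<lambda>x. f x * exp (b2 * V2 x))" using fi b by simp
  have I2: "integrable lborel (\<lambda>x. m * exp (b2 * V2 x))" using intZ b by simp
  have I3: "integrable lborel (\<lambda>x. h0 * (f x * exp (b1 * V2 x)))" using fi b1 by simp
  have I4: "integrable lborel (\<lambda>x. (m * h0) * exp (b1 * V2 x))" using intZ b1 by simp
  have gi: "integrable lborel g"
    unfolding geq using I1 I2 I3 I4 by (intro Bochner_Integration.integrable_add Bochner_Integration.integrable_diff)
  have Ig: "integral\<^sup>L lborel g = N f b2 - m * Z b2 - h0 * N f b1 + m * h0 * Z b1"
    unfolding geq N_def Z_def using I1 I2 I3 I4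
    by (simp add: Bochner_Integration.integral_add Bochner_Integration.integral_diff
        Bochner_Integration.integrable_diff)
  have Zp: "Z b1 > 0" "Z b2 > 0" using Zpos b b1 by auto
  have Nm: "N f b1 = m * Z b1" unfolding m_def using Zp by simp
  have Ig2: "integral\<^sup>L lborel g = N f b2 - m * Z b2" unfolding Ig Nm by simp
  have key: "m < N f b2 / Z b2" if "integral\<^sup>L lborel g > 0"
    using that Zp unfolding Ig2 by (simp add: field_simps)
  have "integral\<^sup>L lborel g \<ge> 0" using gn by (intro integral_nonneg_AE) auto
  then show "N f b1 / Z b1 \<le> N f b2 / Z b2"
    using Zp unfolding Ig2 m_def[symmetric] by (simp add: field_simps)
  assume fV: "f = V2" and bs: "b1 < b2"
  have cp: "c > 0" using bs c_def by simp
  obtain x1 where x1: "V2 x1 > \<bar>m\<bar>" using orlicz_unbounded[OF o2] by blast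
  obtain x2 where x2: "V2 x2 > V2 x1" using orlicz_unbounded[OF o2] by blast
  have "h x1 < h x2" unfolding h_def using x2 cp by simp
  moreover have "V2 x1 > m" "V2 x2 > m" using x1 x2 abs_ge_self[of m] by linarith+
  ultimately obtain xs where xs: "h xs \<noteq> h0" "V2 xs > m"
    by (cases "h x1 = h0") (metis less_irrefl)+
  have "(f xs - m) * (h xs - h0) \<noteq> 0" using xs fV by simp
  then have "(f xs - m) * (h xs - h0) > 0" using h0[of xs] by linarith
  then have gxs: "g xs > 0" unfolding g_def by simp
  have gc: "continuous_on UNIV g"
    unfolding g_def h_def using orlicz_cont[OF of] orlicz_cont[OF o2]
    by (intro continuous_intros) auto
  have "integral\<^sup>L lborel g > 0" by (rule pos_integral[OF gc gn gi gxs])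
  then show "N f b1 / Z b1 < N f b2 / Z b2" using key m_def by simp
qed

end

context ctx begin

lemma contN:
  assumes fm[measurable]: "f \<in> borel_measurable borel" and fn: "\<And>x. f x \<ge> 0"
    and fi: "\<And>a. a < 0 \<Longrightarrow> integrable lborel (\<lambda>x. f x * exp (a * V2 x))"
    and c: "c < 0"
  shows "continuous_on {..c} (N f)"
proof (rule continuous_on_sequentiallyI)
  fix u :: "nat \<Rightarrow> real" and a
  assume u: "\<forall>n. u n \<in> {..c}" "a \<in> {..c}" "u \<longlonglongrightarrow> a"
  show "(\<lambda>n. N f (u n)) \<longlonglongrightarrow> N f a"
    unfolding N_def
  proof (rule integral_dominated_convergence[where w="\<lambda>x. f x * exp (c * V2 x)"])
    show "integrable lborel (\<lambda>x. f x * exp (c * V2 x))" using fi c by simp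
    show "AE x in lborel. (\<lambda>n. f x * exp (u n * V2 x)) \<longlonglongrightarrow> f x * exp (a * V2 x)"
      using u(3) by (intro AE_I2 tendsto_intros)
    show "AE x in lborel. norm (f x * exp (u n * V2 x)) \<le> f x * exp (c * V2 x)" for n
    proof (intro AE_I2)
      fix x
      have "u n * V2 x \<le> c * V2 x" using u(1) n2[of x] by (intro mult_right_mono) auto
      then have "exp (u n * V2 x) \<le> exp (c * V2 x)" by simp
      then show "norm (f x * exp (u n * V2 x)) \<le> f x * exp (c * V2 x)"
        using fn[of x] by (simp add: abs_mult mult_left_mono)
    qed
    show "(\<lambda>x. f x * exp (a * V2 x)) \<in> borel_measurable lborel"
      using fi[of a] u(2) c by (intro borel_measurable_integrable) auto
    show "(\<lambda>x. f x * exp (u n * V2 x)) \<in> borel_measurable lborel" for n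
    proof -
      have "u n \<le> c" using u(1) by auto
      then show ?thesis using fi[of "u n"] c by (intro borel_measurable_integrable) auto
    qed
  qed
qed

end

context ctx begin
lemma small: "\<exists>b<0. N V1 b / Z b < 1"
proof -
  have p1: "V1 1 > 0" and p2: "V2 1 > 0" using o1 o2 unfolding orlicz_def by auto
  define \<delta> where "\<delta> = min 1 (1 / (4 * (V1 1 + 1)))"
  have d0: "\<delta> > 0" "\<delta> \<le> 1" using p1 by (auto simp: \<delta>_def)
  have "V1 \<delta> \<le> (\<delta> / 1) * V1 1" using d0 by (intro orlicz_scale[OF o1]) auto
  also have "\<dots> \<le> 1 / (4 * (V1 1 + 1)) * V1 1" using p1 by (intro mult_right_mono) (auto simp: \<delta>_def)
  also have "\<dots> < 1/2" using p1 by (simp add: field_simps)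
  finally have Vd: "V1 \<delta> < 1/2" .
  define m where "m = V2 \<delta>"
  have m0: "m > 0" using o2 d0 unfolding orlicz_def m_def by auto
  define \<eta> where "\<eta> = min 1 (m / (2 * (V2 1 + 1)))"
  have e0: "\<eta> > 0" "\<eta> \<le> 1" using p2 m0 by (auto simp: \<eta>_def)
  have "V2 \<eta> \<le> (\<eta> / 1) * V2 1" using e0 by (intro orlicz_scale[OF o2]) auto
  also have "\<dots> \<le> m / (2 * (V2 1 + 1)) * V2 1" using p2 by (intro mult_right_mono) (auto simp: \<eta>_def)
  also have "\<dots> \<le> m / 2" using p2 m0 by (simp add: field_simps)
  finally have Ve: "V2 \<eta> \<le> m / 2" .
  define I where "I = N V1 (-1)"
  have I0: "I \<ge> 0" unfolding I_def N_def using n1 by (intro integral_nonneg_AE) auto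
  define s0 where "s0 = exp m * I / \<eta> + 1"
  have s00: "s0 > 0" unfolding s0_def using I0 e0 by (intro add_nonneg_pos divide_nonneg_pos mult_nonneg_nonneg) auto
  define b where "b = min (-1) (-2 * s0 / m)"
  have b1: "b \<le> -1" and b0: "b < 0" by (auto simp: b_def)
  define s where "s = - b * m / 2"
  have ss0: "s \<ge> s0" using m0 unfolding s_def b_def by (auto simp: min_def field_simps)
  have Zp: "Z b > 0" using Zpos b0 by simp
  have ptw: "V1 x * exp (b * V2 x) \<le> (1/2) * exp (b * V2 x) + exp ((b + 1) * m) * (V1 x * exp (-1 * V2 x))" for x
  proof (cases "\<bar>x\<bar> \<le> \<delta>")
    case True
    then have "V1 x \<le> V1 \<delta>" using d0 by (intro orlicz_mono[OF o1]) auto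
    then have "V1 x * exp (b * V2 x) \<le> (1/2) * exp (b * V2 x)" using Vd by (intro mult_right_mono) auto
    moreover have "exp ((b + 1) * m) * (V1 x * exp (-1 * V2 x)) \<ge> 0" using n1[of x] by simp
    ultimately show ?thesis by linarith
  next
    case False
    then have "V2 x \<ge> m" unfolding m_def using d0 by (intro orlicz_mono[OF o2]) auto
    then have "(b + 1) * V2 x \<le> (b + 1) * m" using b1 by (intro mult_left_mono_neg) auto
    then have "exp ((b + 1) * V2 x) \<le> exp ((b + 1) * m)" by simp
    then have "V1 x * exp ((b + 1) * V2 x) \<le> V1 x * exp ((b + 1) * m)" using n1[of x] by (intro mult_left_mono) auto
    then have A: "(V1 x * exp ((b + 1) * V2 x)) * exp (-1 * V2 x) \<le> (V1 x * exp ((b + 1) * m)) * exp (-1 * V2 x)"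
      by (intro mult_right_mono) auto
    have E: "exp ((b + 1) * V2 x) * exp (-1 * V2 x) = exp (b * V2 x)"
      unfolding mult_exp_exp by (simp add: algebra_simps)
    have "V1 x * exp (b * V2 x) = (V1 x * exp ((b + 1) * V2 x)) * exp (-1 * V2 x)"
      using E by (simp add: mult.assoc)
    also have "\<dots> \<le> (V1 x * exp ((b + 1) * m)) * exp (-1 * V2 x)" by (rule A)
    also have "\<dots> = exp ((b + 1) * m) * (V1 x * exp (-1 * V2 x))" by (simp add: algebra_simps)
    finally have "V1 x * exp (b * V2 x) \<le> exp ((b + 1) * m) * (V1 x * exp (-1 * V2 x))" .
    moreover have "(1/2) * exp (b * V2 x) \<ge> 0" by simp
    ultimately show ?thesis by linarith
  qed
  have iA: "integrable lborel (\<lambda>x. (1/2) * exp (b * V2 x))" using intZ[OF b0] by simp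
  have iB: "integrable lborel (\<lambda>x. exp ((b + 1) * m) * (V1 x * exp (-1 * V2 x)))" using int1[of "-1"] by simp
  have "N V1 b \<le> (\<integral>x. (1/2) * exp (b * V2 x) + exp ((b + 1) * m) * (V1 x * exp (-1 * V2 x)) \<partial>lborel)"
    unfolding N_def using ptw int1[OF b0] iA iB
    by (intro integral_mono Bochner_Integration.integrable_add) auto
  also have "\<dots> = Z b / 2 + exp ((b + 1) * m) * I"
    using iA iB unfolding Z_def I_def N_def by (simp add: Bochner_Integration.integral_add)
  finally have Nb: "N V1 b \<le> Z b / 2 + exp ((b + 1) * m) * I" .
  have ptw2: "indicator {-\<eta>..\<eta>} x * exp (b * m / 2) \<le> exp (b * V2 x)" for x
  proof (cases "x \<in> {-\<eta>..\<eta>}")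
    case True
    then have "V2 x \<le> V2 \<eta>" using e0 by (intro orlicz_mono[OF o2]) auto
    then have "b * (m / 2) \<le> b * V2 x" using Ve b0 by (intro mult_left_mono_neg) auto
    then show ?thesis using True by simp
  qed simp
  have iC: "integrable lborel (\<lambda>x. indicator {-\<eta>..\<eta>} x * exp (b * m / 2))"
    by (intro integrable_mult_left integrable_real_indicator) (auto simp: emeasure_lborel_Icc_eq)
  have "(\<integral>x. indicator {-\<eta>..\<eta>} x * exp (b * m / 2) \<partial>lborel) \<le> Z b"
    unfolding Z_def using ptw2 iC intZ[OF b0] by (intro integral_mono) auto
  moreover have "(\<integral>x. indicator {-\<eta>..\<eta>} x * exp (b * m / 2) \<partial>lborel) = 2 * \<eta> * exp (b * m / 2)"
    using e0 by (simp add: measure_def)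
  ultimately have Zb: "2 * \<eta> * exp (b * m / 2) \<le> Z b" by simp
  have es: "exp (b * m / 2) * (1 + s) \<le> 1"
  proof -
    have "1 + s \<le> exp s" by (rule exp_ge_add_one_self)
    moreover have "exp (b * m / 2) * exp s = 1" unfolding s_def by (simp add: mult_exp_exp)
    ultimately show ?thesis by (metis exp_gt_zero mult_left_mono less_imp_le)
  qed
  have "exp (b * m / 2) * (exp m * I) < \<eta> * 1"
  proof -
    have "exp m * I < \<eta> * s0" using e0 unfolding s0_def by (simp add: field_simps)
    also have "\<dots> \<le> \<eta> * (1 + s)" using e0 ss0 by (intro mult_left_mono) auto
    finally have "exp (b * m / 2) * (exp m * I) < exp (b * m / 2) * (\<eta> * (1 + s))" by simp
    also have "\<dots> = \<eta> * (exp (b * m / 2) * (1 + s))" by simp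
    also have "\<dots> \<le> \<eta> * 1" using es e0 by (intro mult_left_mono) auto
    finally show ?thesis .
  qed
  then have "exp (b * m / 2) * (exp (b * m / 2) * (exp m * I)) < exp (b * m / 2) * \<eta>" by simp
  moreover have "exp ((b + 1) * m) = exp (b * m / 2) * exp (b * m / 2) * exp m"
    by (simp add: mult_exp_exp algebra_simps)
  ultimately have "exp ((b + 1) * m) * I < exp (b * m / 2) * \<eta>" by (simp add: algebra_simps)
  moreover have "exp (b * m / 2) * \<eta> \<le> Z b / 2" using Zb by (simp add: algebra_simps)
  ultimately have "N V1 b < Z b" using Nb by linarith
  then show ?thesis using Zp b0 by (intro exI[of _ b]) simp
qed

end

context ctx begin

lemma main_ctx:
  fixes \<alpha> :: "real \<Rightarrow> real"
  assumes ha: "\<And>R. R > 0 \<Longrightarrow> \<alpha> R < 0 \<and> R = m_V V2 (gibbs_measure V2 (\<alpha> R))"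
  shows "\<exists>Rb>0. m_V V1 (gibbs_measure V2 (\<alpha> Rb)) = 1 \<and>
           (\<forall>R. 0 < R \<and> R \<le> Rb \<longrightarrow>
              m_V V1 (gibbs_measure V2 (\<alpha> R)) \<le> m_V V1 (gibbs_measure V2 (\<alpha> Rb)))"
proof -
  define F where "F b = N V1 b / Z b" for b
  define G where "G b = N V2 b / Z b" for b
  have mF: "m_V V1 (gibbs_measure V2 b) = F b" for b unfolding F_def N_def by (rule mV_eq[OF m1])
  have mG: "m_V V2 (gibbs_measure V2 b) = G b" for b unfolding G_def N_def by (rule mV_eq[OF m2])
  have hG: "\<alpha> R < 0" "G (\<alpha> R) = R" if "R > 0" for R using ha[OF that] mG by auto
  have Fmono: "F b1 \<le> F b2" if "b1 \<le> b2" "b2 < 0" for b1 b2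
    unfolding F_def by (rule cheb(1)[OF o1 int1 that])
  have Gstrict: "G b1 < G b2" if "b1 < b2" "b2 < 0" for b1 b2
    unfolding G_def using that by (intro cheb(2)[OF o2 int2]) auto
  have G0: "G b \<ge> 0" for b
  proof -
    have "N V2 b \<ge> 0" unfolding N_def using n2 by (intro integral_nonneg_AE) auto
    then show ?thesis unfolding G_def using Z_nonneg[of b] by simp
  qed
  obtain C where C: "\<And>x. V2 x - C \<le> V1 x" using constC by blast
  have FG: "F b \<ge> G b - C" if b: "b < 0" for b
  proof -
    have "(\<integral>x. V2 x * exp (b * V2 x) - C * exp (b * V2 x) \<partial>lborel) \<le> N V1 b"
      unfolding N_def
    proof (intro integral_mono)
      show "integrable lborel (\<lambda>x. V2 x * exp (b * V2 x) - C * exp (b * V2 x))"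
        using int2[OF b] intZ[OF b] by (intro Bochner_Integration.integrable_diff integrable_mult_right)
      show "integrable lborel (\<lambda>x. V1 x * exp (b * V2 x))" using int1[OF b] .
      fix x
      have "(V2 x - C) * exp (b * V2 x) \<le> V1 x * exp (b * V2 x)" using C[of x] by (intro mult_right_mono) auto
      then show "V2 x * exp (b * V2 x) - C * exp (b * V2 x) \<le> V1 x * exp (b * V2 x)" by (simp add: algebra_simps)
    qed
    also have "(\<integral>x. V2 x * exp (b * V2 x) - C * exp (b * V2 x) \<partial>lborel) = N V2 b - C * Z b"
      unfolding N_def Z_def using int2[OF b] intZ[OF b] by simp
    finally have "N V2 b - C * Z b \<le> N V1 b" .
    then have "(N V2 b - C * Z b) / Z b \<le> N V1 b / Z b" using Zpos[OF b] by (intro divide_right_mono) auto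
    moreover have "(N V2 b - C * Z b) / Z b = G b - C" unfolding G_def using Zpos[OF b] by (simp add: diff_divide_distrib)
    ultimately show ?thesis unfolding F_def by simp
  qed
  define R1 where "R1 = max 1 (C + 2)"
  have R1: "R1 > 0" unfolding R1_def by simp
  define b1 where "b1 = \<alpha> R1"
  have b1: "b1 < 0" "G b1 = R1" using hG[OF R1] b1_def by auto
  have Fb1: "F b1 \<ge> 1" using FG[OF b1(1)] b1(2) unfolding R1_def by simp
  obtain b0 where b0: "b0 < 0" "F b0 < 1" using small unfolding F_def by blast
  have b01: "b0 \<le> b1"
  proof (rule ccontr)
    assume "\<not> b0 \<le> b1"
    then have "F b1 \<le> F b0" using Fmono b0 by simp
    then show False using Fb1 b0 by simp
  qed
  have cF: "continuous_on {..b1} F"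
  proof -
    have c1: "continuous_on {..b1} (N V1)" by (rule contN[OF m1 n1 int1 b1(1)])
    have c2: "continuous_on {..b1} (N (\<lambda>_. 1))" by (rule contN) (use intZ b1 in auto)
    have ZN: "N (\<lambda>_. 1) = Z" unfolding N_def Z_def by auto
    have "continuous_on {..b1} (\<lambda>b. N V1 b / Z b)"
    proof (rule continuous_on_divide[OF c1])
      show "continuous_on {..b1} Z" using c2 unfolding ZN .
      show "\<forall>b\<in>{..b1}. Z b \<noteq> 0"
      proof
        fix b assume "b \<in> {..b1}"
        then have "b < 0" using b1(1) by simp
        then show "Z b \<noteq> 0" using Zpos[of b] by simp
      qed
    qed
    then show ?thesis unfolding F_def .
  qed
  obtain bs where bs: "b0 \<le> bs" "bs \<le> b1" "F bs = 1"
  proof -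
    have "continuous_on {b0..b1} F" by (rule continuous_on_subset[OF cF]) auto
    moreover have "F b0 \<le> 1" using b0 by simp
    ultimately have "\<exists>x. b0 \<le> x \<and> x \<le> b1 \<and> F x = 1" using IVT'[of F b0 1 b1] Fb1 b01 by blast
    then show ?thesis using that by blast
  qed
  have bsn: "bs < 0" using bs b1 by simp
  define Rb where "Rb = G bs"
  have Rb: "Rb > 0" unfolding Rb_def using Gstrict[of "bs - 1" bs] bsn G0[of "bs - 1"] by simp
  have aRb: "\<alpha> Rb = bs"
  proof -
    have a: "\<alpha> Rb < 0" "G (\<alpha> Rb) = G bs" using hG[OF Rb] Rb_def by auto
    show ?thesis
    proof (rule linorder_cases[of "\<alpha> Rb" bs])
      assume "\<alpha> Rb < bs" then show ?thesis using Gstrict[of "\<alpha> Rb" bs] bsn a by simp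
    next
      assume "bs < \<alpha> Rb" then show ?thesis using Gstrict[of bs "\<alpha> Rb"] a by simp
    qed
  qed
  have mono: "F (\<alpha> R) \<le> F (\<alpha> Rb)" if R: "0 < R" "R \<le> Rb" for R
  proof -
    have "\<alpha> R \<le> \<alpha> Rb"
    proof (rule ccontr)
      assume "\<not> \<alpha> R \<le> \<alpha> Rb"
      then have "G (\<alpha> Rb) < G (\<alpha> R)" using Gstrict[of "\<alpha> Rb" "\<alpha> R"] hG[OF R(1)] by simp
      then show False using hG[OF R(1)] hG[OF Rb] R by simp
    qed
    then show ?thesis using Fmono[of "\<alpha> R" "\<alpha> Rb"] hG(1)[OF Rb] by simp
  qed
  show ?thesis unfolding mF
  proof (intro exI[of _ Rb] conjI allI impI)
    show "0 < Rb" by (rule Rb)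
    show "F (\<alpha> Rb) = 1" using aRb bs(3) by simp
    fix R assume "0 < R \<and> R \<le> Rb"
    then show "F (\<alpha> R) \<le> F (\<alpha> Rb)" using mono by blast
  qed
qed

end

theorem mainTheorem5:
  fixes V1 V2 :: "real \<Rightarrow> real" and \<alpha> :: "real \<Rightarrow> real"
  assumes "orlicz V1" and "orlicz V2"
    and "filterlim (\<lambda>x. V1 x / V2 x) at_top at_infinity"
    and "\<And>a. a < 0 \<Longrightarrow> integrable lborel (\<lambda>x. V1 x * exp (a * V2 x))"
    and "\<And>R. R > 0 \<Longrightarrow> \<alpha> R < 0 \<and> R = m_V V2 (gibbs_measure V2 (\<alpha> R))"
  shows "\<exists>Rb>0. m_V V1 (gibbs_measure V2 (\<alpha> Rb)) = 1 \<and>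
           (\<forall>R. 0 < R \<and> R \<le> Rb \<longrightarrow>
              m_V V1 (gibbs_measure V2 (\<alpha> R)) \<le> m_V V1 (gibbs_measure V2 (\<alpha> Rb)))"
proof -
  interpret ctx V1 V2 by unfold_locales (use assms(1-4) in auto)
  show ?thesis by (rule main_ctx[OF assms(5)]) auto
qed

end
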